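(* Let $X$ be a nontrivial real Banach space. The following assertions are equivalent: (i) $X^*$ is weakly octahedral; (ii) whenever $E$ is a finite-dimensional subspace of $X^*$, $x\in B_X$, and $\varepsilon>0$, there is a $y^*\in S_{X^*}$ such that $\|x^*+y^*\|\geq(1-\varepsilon)(|x^*(x)|+\|y^*\|)$ for all $x^*\in E$; (iii) whenever $n\in\mathbb{N}$, $x_1^*,\dots,x_n^*\in S_{X^*}$, $x\in B_X$, and $\varepsilon>0$, there is a $y^*\in S_{X^*}$ such that $\|x_i^*+ty^*\|\geq(1-\varepsilon)(|x_i^*(x)|+t)$ for all $i\in\{1,\dots,n\}$ and $t\geq\varepsilon$.
   Context: $B_Z$, $S_Z$ denote the closed unit ball and unit sphere of a Banach space $Z$. A Banach space $Z$ is called weakly octahedral if for every finite-dimensional subspace $E$ of $Z$, every $z^*\in B_{Z^*}$, and every $\varepsilon>0$, there is a $y\in S_Z$ such that $\|z+y\|\geq(1-\varepsilon)(|z^*(z)|+\|y\|)$ for all $z\in E$. (Applied to $Z=X^*$, the functionals $z^*$ range over $B_{X^{**}}$.) *)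

theory Defs
  imports "HOL-Analysis.Analysis"
begin

text \<open>Weakly octahedral normed space Z (Z given as a type). Finite-dimensional subspaces
  are the spans of finite sets; the dual Z* is the type of bounded linear functionals.\<close>
definition weakly_octahedral :: "'z::real_normed_vector itself \<Rightarrow> bool" where
  "weakly_octahedral _ \<longleftrightarrow>
     (\<forall>F::'z set. finite F \<longrightarrow>
       (\<forall>g::'z \<Rightarrow>\<^sub>L real. norm g \<le> 1 \<longrightarrow>
         (\<forall>\<epsilon>>0. \<exists>y::'z. norm y = 1 \<and>
            (\<forall>z\<in>span F. norm (z + y) \<ge> (1 - \<epsilon>) * (\<bar>blinfun_apply g z\<bar> + norm y)))))"

end

theory Submission
  imports Defs
begin

lemma compact_PiE_cube:
  fixes B :: "'v set"
  shows "compact (Pi\<^sub>E UNIV (\<lambda>i. if i \<in> B then cball (0::real) r else {0}))"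
proof -
  have "compactin (product_topology (\<lambda>i. euclidean) UNIV) (Pi\<^sub>E UNIV (\<lambda>i. if i \<in> B then cball (0::real) r else {0}))"
    by (subst compactin_PiE) auto
  then show ?thesis by (simp add: euclidean_product_topology)
qed

lemma cont_lin_comb:
  fixes B :: "'v::real_normed_vector set"
  shows "continuous_on S (\<lambda>c::'v\<Rightarrow>real. \<Sum>b\<in>B. c b *\<^sub>R b)"
  by (intro continuous_on_sum continuous_on_scaleR continuous_on_const
        continuous_on_subset[OF continuous_on_product_coordinates]) auto

lemma cont_abs_sum:
  fixes B :: "'v set"
  shows "continuous_on S (\<lambda>c::'v\<Rightarrow>real. \<Sum>b\<in>B. \<bar>c b\<bar>)"
  by (intro continuous_on_sum continuous_on_rabs
        continuous_on_subset[OF continuous_on_product_coordinates]) auto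

lemma t1: fixes B :: "'v set" assumes fin: "finite B" and b0: "b0 \<in> B"
  shows "(\<lambda>i. if i = b0 then 1 else 0) \<in> Pi\<^sub>E UNIV (\<lambda>i. if i \<in> B then cball (0::real) 1 else {0}) \<inter> {c. (\<Sum>b\<in>B. \<bar>c b\<bar>) = 1}"
proof -
  have "(\<lambda>b. \<bar>(if b = b0 then 1 else 0)::real\<bar>) = (\<lambda>b. if b = b0 then 1 else 0)" by auto
  then have "(\<Sum>b\<in>B. \<bar>(if b = b0 then 1 else 0)::real\<bar>) = 1" using fin b0 by simp
  moreover have "(\<lambda>i. if i = b0 then 1 else 0) \<in> Pi\<^sub>E UNIV (\<lambda>i. if i \<in> B then cball (0::real) 1 else {0})"
    using b0 by (simp add: PiE_iff)
  ultimately show ?thesis by simp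
qed

lemma norm_equiv:
  fixes B :: "'v::real_normed_vector set"
  assumes fin: "finite B" and ind: "independent B"
  obtains m where "m > 0" "\<And>c. m * (\<Sum>b\<in>B. \<bar>c b\<bar>) \<le> norm (\<Sum>b\<in>B. c b *\<^sub>R b)"
proof (cases "B = {}")
  case True
  then show ?thesis using that[of 1] by simp
next
  case False
  then obtain b0 where b0: "b0 \<in> B" by blast
  define K where "K = Pi\<^sub>E UNIV (\<lambda>i. if i \<in> B then cball (0::real) 1 else {0}) \<inter> {c. (\<Sum>b\<in>B. \<bar>c b\<bar>) = 1}"
  have "compact K" unfolding K_def
    by (intro compact_Int_closed compact_PiE_cube closed_Collect_eq cont_abs_sum continuous_on_const)
  moreover have "K \<noteq> {}" using t1[OF fin b0] unfolding K_def by blast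
  moreover have "continuous_on K (\<lambda>c. norm (\<Sum>b\<in>B. c b *\<^sub>R b))"
    by (intro continuous_on_norm cont_lin_comb)
  ultimately obtain c0 where c0: "c0 \<in> K" and min: "\<And>c. c \<in> K \<Longrightarrow> norm (\<Sum>b\<in>B. c0 b *\<^sub>R b) \<le> norm (\<Sum>b\<in>B. c b *\<^sub>R b)"
    using continuous_attains_inf[of K "\<lambda>c. norm (\<Sum>b\<in>B. c b *\<^sub>R b)"] by auto
  define m where "m = norm (\<Sum>b\<in>B. c0 b *\<^sub>R b)"
  have "m > 0"
  proof (rule ccontr)
    assume "\<not> m > 0"
    then have "(\<Sum>b\<in>B. c0 b *\<^sub>R b) = 0" unfolding m_def by simp
    then have "\<forall>b\<in>B. c0 b = 0" using independentD[OF ind fin] by blast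
    then have "(\<Sum>b\<in>B. \<bar>c0 b\<bar>) = 0" by simp
    then show False using c0 unfolding K_def by simp
  qed
  moreover have "m * (\<Sum>b\<in>B. \<bar>c b\<bar>) \<le> norm (\<Sum>b\<in>B. c b *\<^sub>R b)" for c
  proof (cases "(\<Sum>b\<in>B. \<bar>c b\<bar>) = 0")
    case True then show ?thesis by simp
  next
    case False
    define s where "s = (\<Sum>b\<in>B. \<bar>c b\<bar>)"
    have s0: "s \<ge> 0" unfolding s_def by (simp add: sum_nonneg)
    have s: "s > 0" using False s0 unfolding s_def by linarith
    define c' where "c' = (\<lambda>i. if i \<in> B then c i / s else 0)"
    have le: "\<bar>c i\<bar> \<le> s" if "i \<in> B" for i
      unfolding s_def using member_le_sum[of i B "\<lambda>b. \<bar>c b\<bar>"] that fin by simp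
    have sum1: "(\<Sum>b\<in>B. \<bar>c' b\<bar>) = 1"
    proof -
      have "(\<Sum>b\<in>B. \<bar>c' b\<bar>) = (\<Sum>b\<in>B. \<bar>c b\<bar> / s)"
        unfolding c'_def using s by (intro sum.cong) (auto simp: abs_divide)
      also have "\<dots> = s / s" unfolding s_def sum_divide_distrib[symmetric] ..
      also have "\<dots> = 1" using s by simp
      finally show ?thesis .
    qed
    have "c' \<in> Pi\<^sub>E UNIV (\<lambda>i. if i \<in> B then cball (0::real) 1 else {0})"
    proof (unfold PiE_iff, intro conjI ballI)
      fix i :: 'v
      show "c' i \<in> (if i \<in> B then cball 0 1 else {0})"
      proof (cases "i \<in> B")
        case True
        then have "\<bar>c i\<bar> / s \<le> 1" using le s by simp
        then show ?thesis using True s unfolding c'_def by (simp add: abs_divide)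
      next
        case False then show ?thesis unfolding c'_def by simp
      qed
    qed simp
    then have "c' \<in> K" unfolding K_def using sum1 by simp
    have eq: "(\<Sum>b\<in>B. c' b *\<^sub>R b) = (1/s) *\<^sub>R (\<Sum>b\<in>B. c b *\<^sub>R b)"
      unfolding c'_def scaleR_sum_right by (intro sum.cong) auto
    have "m \<le> norm (\<Sum>b\<in>B. c' b *\<^sub>R b)" using min[OF \<open>c' \<in> K\<close>] unfolding m_def .
    also have "\<dots> = norm (\<Sum>b\<in>B. c b *\<^sub>R b) / s" using s by (simp add: eq)
    finally have "m \<le> norm (\<Sum>b\<in>B. c b *\<^sub>R b) / s" .
    then show ?thesis using s unfolding s_def[symmetric] by (simp add: pos_le_divide_eq mult.commute)
  qed
  ultimately show ?thesis using that by blast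
qed


lemma compact_span_cball:
  fixes F :: "'v::real_normed_vector set"
  assumes finF: "finite F"
  shows "compact (span F \<inter> cball 0 R)"
proof -
  obtain B where B: "B \<subseteq> F" "independent B" "F \<subseteq> span B"
    using maximal_independent_subset[of F] by blast
  have fin: "finite B" using B(1) finF finite_subset by blast
  have spanB: "span B = span F"
    using B(1,3) by (metis span_mono span_span subset_antisym)
  obtain m where m: "m > 0" "\<And>c. m * (\<Sum>b\<in>B. \<bar>c b\<bar>) \<le> norm (\<Sum>b\<in>B. c b *\<^sub>R b)"
    using norm_equiv[OF fin B(2)] by blast
  define L where "L = (\<lambda>c::'v\<Rightarrow>real. \<Sum>b\<in>B. c b *\<^sub>R b)"
  define P where "P = Pi\<^sub>E UNIV (\<lambda>i. if i \<in> B then cball (0::real) (R/m) else {0}) \<inter> {c. norm (L c) \<le> R}"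
  have contL: "continuous_on S L" for S unfolding L_def by (rule cont_lin_comb)
  have "compact P" unfolding P_def
    by (intro compact_Int_closed compact_PiE_cube closed_Collect_le continuous_on_norm contL continuous_on_const)
  then have cP: "compact (L ` P)" by (intro compact_continuous_image contL)
  have "span F \<inter> cball 0 R = L ` P"
  proof
    show "L ` P \<subseteq> span F \<inter> cball 0 R"
    proof
      fix f assume "f \<in> L ` P"
      then obtain c where c: "c \<in> P" "f = L c" by blast
      have "f \<in> span B" unfolding c(2) L_def
        by (intro span_sum span_scale span_base) auto
      then show "f \<in> span F \<inter> cball 0 R" using c unfolding P_def spanB by auto
    qed
  next
    show "span F \<inter> cball 0 R \<subseteq> L ` P"
    proof
      fix f assume f: "f \<in> span F \<inter> cball 0 R"
      then have "f \<in> span B" using spanB by auto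
      then obtain u where u: "f = (\<Sum>v\<in>B. u v *\<^sub>R v)" using span_finite[OF fin] by auto
      define c where "c = (\<lambda>i. if i \<in> B then u i else 0)"
      have Lc: "L c = f" unfolding L_def u c_def by (intro sum.cong) auto
      have nf: "norm f \<le> R" using f by auto
      have "m * (\<Sum>b\<in>B. \<bar>c b\<bar>) \<le> R" using m(2)[of c] Lc nf unfolding L_def by simp
      then have sle: "(\<Sum>b\<in>B. \<bar>c b\<bar>) \<le> R / m" using m(1) by (simp add: pos_le_divide_eq mult.commute)
      have "c \<in> Pi\<^sub>E UNIV (\<lambda>i. if i \<in> B then cball (0::real) (R/m) else {0})"
      proof (unfold PiE_iff, intro conjI ballI)
        fix i :: 'v
        show "c i \<in> (if i \<in> B then cball 0 (R/m) else {0})"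
        proof (cases "i \<in> B")
          case True
          have "\<bar>c i\<bar> \<le> (\<Sum>b\<in>B. \<bar>c b\<bar>)" using member_le_sum[of i B "\<lambda>b. \<bar>c b\<bar>"] True fin by simp
          then show ?thesis using True sle by simp
        next
          case False then show ?thesis unfolding c_def by simp
        qed
      qed simp
      then have "c \<in> P" unfolding P_def using Lc nf by simp
      then show "f \<in> L ` P" using Lc by force
    qed
  qed
  then show ?thesis using cP by simp
qed

lemma span_net:
  fixes F :: "'v::real_normed_vector set"
  assumes "finite F" "\<eta> > 0"
  obtains N where "finite N" "N \<subseteq> span F \<inter> cball 0 R"
    "\<And>f. f \<in> span F \<Longrightarrow> norm f \<le> R \<Longrightarrow> \<exists>n\<in>N. norm (f - n) < \<eta>"
proof -
  let ?S = "span F \<inter> cball 0 R"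
  have "?S \<subseteq> (\<Union>c\<in>?S. ball c \<eta>)" using assms(2) by force
  then obtain N where N: "N \<subseteq> ?S" "finite N" "?S \<subseteq> (\<Union>c\<in>N. ball c \<eta>)"
    using compactE_image[OF compact_span_cball[OF assms(1)], of ?S "\<lambda>c. ball c \<eta>"] by blast
  show ?thesis
  proof (rule that[OF N(2,1)])
    fix f assume "f \<in> span F" "norm f \<le> R"
    then have "f \<in> ?S" by simp
    then obtain n where "n \<in> N" "f \<in> ball n \<eta>" using N(3) by blast
    then show "\<exists>n\<in>N. norm (f - n) < \<eta>" by (auto simp: dist_norm norm_minus_commute)
  qed
qed

lemma norm_le_unit:
  fixes e :: "'a::real_normed_vector \<Rightarrow>\<^sub>L real"
  assumes K: "0 \<le> K" and h: "\<And>x. norm x \<le> 1 \<Longrightarrow> \<bar>e x\<bar> \<le> K"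
  shows "norm e \<le> K"
proof (rule norm_blinfun_bound[OF K])
  fix x :: 'a
  show "norm (e x) \<le> K * norm x"
  proof (cases "x = 0")
    case True then show ?thesis by simp
  next
    case False
    then have nx: "norm x > 0" by simp
    have "\<bar>e ((1/norm x) *\<^sub>R x)\<bar> \<le> K" using h False by simp
    then have "\<bar>e x\<bar> / norm x \<le> K" by (simp add: blinfun.scaleR_right abs_mult)
    then show ?thesis using nx by (simp add: pos_divide_le_eq)
  qed
qed

lemma goldstine_finite:
  fixes N :: "('a::real_normed_vector \<Rightarrow>\<^sub>L real) set" and g :: "('a \<Rightarrow>\<^sub>L real) \<Rightarrow>\<^sub>L real"
  assumes finN: "finite N" and g1: "norm g \<le> 1" and eta: "\<eta> > 0"
  shows "\<exists>x. norm x \<le> 1 \<and> (\<forall>n\<in>N. \<bar>g n - n x\<bar> \<le> \<eta>)"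
proof (rule ccontr)
  assume H: "\<not> (\<exists>x. norm x \<le> 1 \<and> (\<forall>n\<in>N. \<bar>g n - n x\<bar> \<le> \<eta>))"
  define D where "D x = (\<Sum>n\<in>N. (blinfun_apply n x - g n)\<^sup>2)" for x
  define U where "U = D ` {x::'a. norm x \<le> 1}"
  have Dnn: "D x \<ge> 0" for x unfolding D_def by (simp add: sum_nonneg)
  have Dpos: "D x \<ge> \<eta>\<^sup>2" if "norm x \<le> 1" for x
  proof -
    from H that obtain n where n: "n \<in> N" "\<bar>g n - n x\<bar> > \<eta>" by force
    have "\<eta>\<^sup>2 \<le> \<bar>n x - g n\<bar>\<^sup>2" by (rule power_mono) (use n eta in auto)
    also have "\<dots> = (n x - g n)\<^sup>2" by simp
    also have "\<dots> \<le> D x" unfolding D_def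
      by (rule member_le_sum) (use n finN in auto)
    finally show ?thesis .
  qed
  define d where "d = Inf U"
  have Une: "U \<noteq> {}" unfolding U_def by (auto intro: exI[of _ 0])
  have bdd: "bdd_below U" unfolding U_def using Dnn by (auto intro!: bdd_belowI[of _ 0])
  have dge: "d \<ge> \<eta>\<^sup>2" unfolding d_def by (rule cInf_greatest[OF Une]) (auto simp: U_def Dpos)
  have dpos: "d > 0" using dge eta by (smt (verit) zero_less_power)
  have dle: "d \<le> D x" if "norm x \<le> 1" for x
    unfolding d_def by (rule cInf_lower[OF _ bdd]) (use that in \<open>auto simp: U_def\<close>)
  define M where "M = (\<Sum>n\<in>N. (norm n)\<^sup>2)"
  have M0: "M \<ge> 0" unfolding M_def by (simp add: sum_nonneg)
  define t where "t = min 1 (d / (8*M+1))"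
  have t0: "t > 0" unfolding t_def using dpos M0 by simp
  have t1: "t \<le> 1" unfolding t_def by simp
  have tM: "t * (8*M+1) \<le> d"
  proof -
    have "t \<le> d/(8*M+1)" unfolding t_def by simp
    then show ?thesis using M0 by (simp add: pos_le_divide_eq)
  qed
  have tM': "8*t*M \<le> d" using tM t0 by (simp add: algebra_simps)
  define \<theta> where "\<theta> = t*d/2"
  have "d < d + \<theta>" unfolding \<theta>_def using t0 dpos by simp
  then obtain u where "u \<in> U" "u < d + \<theta>" using cInf_lessD[OF Une] unfolding d_def by blast
  then obtain x0 where x0: "norm x0 \<le> 1" "D x0 < d + \<theta>" unfolding U_def by blast
  define a where "a n = blinfun_apply n x0 - g n" for n
  define e where "e = (\<Sum>n\<in>N. a n *\<^sub>R n)"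
  have ge: "g e = (\<Sum>n\<in>N. a n * g n)" unfolding e_def by (simp add: blinfun.sum_right blinfun.scaleR_right)
  have ex: "e x = (\<Sum>n\<in>N. a n * n x)" for x unfolding e_def by (simp add: blinfun.sum_left blinfun.scaleR_left)
  have ex0: "e x0 = D x0 + g e"
  proof -
    have "e x0 = (\<Sum>n\<in>N. a n * (a n + g n))" unfolding ex by (simp add: a_def)
    also have "\<dots> = (\<Sum>n\<in>N. (a n)\<^sup>2) + (\<Sum>n\<in>N. a n * g n)"
      by (simp add: algebra_simps power2_eq_square sum.distrib)
    also have "(\<Sum>n\<in>N. (a n)\<^sup>2) = D x0" unfolding D_def a_def by simp
    finally show ?thesis using ge by simp
  qed
  have key: "e x' \<ge> g e + d/2" if x': "norm x' \<le> 1" for x'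
  proof -
    define b where "b (n::'a \<Rightarrow>\<^sub>L real) = blinfun_apply n x' - blinfun_apply n x0" for n
    define xt where "xt = x0 + t *\<^sub>R (x' - x0)"
    have "xt = (1-t) *\<^sub>R x0 + t *\<^sub>R x'" unfolding xt_def by (simp add: algebra_simps)
    then have "norm xt \<le> (1-t) * norm x0 + t * norm x'"
      using t0 t1 norm_triangle_ineq[of "(1-t) *\<^sub>R x0" "t *\<^sub>R x'"] by simp
    also have "\<dots> \<le> (1-t) * 1 + t * 1"
      by (intro add_mono mult_left_mono) (use t0 t1 x0 x' in auto)
    finally have nxt: "norm xt \<le> 1" by simp
    let ?A = "\<Sum>n\<in>N. (a n)\<^sup>2" and ?S = "\<Sum>n\<in>N. a n * b n" and ?Q = "\<Sum>n\<in>N. (b n)\<^sup>2"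
    have Dxt: "D xt = ?A + 2*t*?S + t\<^sup>2*?Q"
    proof -
      have "D xt = (\<Sum>n\<in>N. (a n + t * b n)\<^sup>2)" unfolding D_def xt_def a_def b_def
        by (simp add: blinfun.add_right blinfun.scaleR_right blinfun.diff_right algebra_simps)
      also have "\<dots> = (\<Sum>n\<in>N. (a n)\<^sup>2 + 2*t*(a n * b n) + t\<^sup>2 * (b n)\<^sup>2)"
        by (simp add: power2_eq_square algebra_simps)
      also have "\<dots> = ?A + 2*t*?S + t\<^sup>2*?Q" by (simp add: sum.distrib sum_distrib_left)
      finally show ?thesis .
    qed
    have DA: "D x0 = ?A" unfolding D_def a_def by simp
    have Qb: "?Q \<le> 4*M" unfolding M_def sum_distrib_left
    proof (rule sum_mono)
      fix n assume "n \<in> N"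
      have "\<bar>n x'\<bar> \<le> norm n" using norm_blinfun[of n x'] x'
        by (smt (verit) mult_left_le norm_ge_zero real_norm_def)
      moreover have "\<bar>n x0\<bar> \<le> norm n" using norm_blinfun[of n x0] x0(1)
        by (smt (verit) mult_left_le norm_ge_zero real_norm_def)
      ultimately have "\<bar>b n\<bar> \<le> 2 * norm n" unfolding b_def by linarith
      then have "\<bar>b n\<bar>\<^sup>2 \<le> (2 * norm n)\<^sup>2" by (rule power_mono) simp
      then show "(b n)\<^sup>2 \<le> 4 * (norm n)\<^sup>2" by (simp add: power_mult_distrib)
    qed
    have h1: "t\<^sup>2 * ?Q \<le> t\<^sup>2 * (4*M)" by (rule mult_left_mono[OF Qb]) simp
    have h2: "t * (8*t*M) \<le> t * d" by (rule mult_left_mono[OF tM']) (use t0 in simp)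
    have h3: "d \<le> ?A + 2*t*?S + t\<^sup>2*?Q" using dle[OF nxt] Dxt by simp
    have h4: "?A < d + t*d/2" using x0(2) DA \<theta>_def by simp
    have e1: "t\<^sup>2*(4*M) = t*(8*t*M)/2" by (simp add: power2_eq_square algebra_simps)
    have e2: "t*(2*?S+d) = 2*t*?S + t*d" by (simp add: algebra_simps)
    have "0 < t * (2*?S + d)"
      using h1 h2 h3 h4 e1 e2 by linarith
    then have S: "?S > - d/2" using t0 by (simp add: zero_less_mult_iff)
    have "e x' - e x0 = ?S" unfolding ex b_def by (simp add: sum_subtractf[symmetric] right_diff_distrib)
    then show ?thesis using S ex0 dle[OF x0(1)] by linarith
  qed
  define K where "K = - g e - d/2"
  have "e 0 \<ge> g e + d/2" by (rule key) simp
  then have K0: "K \<ge> 0" unfolding K_def by simp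
  have "norm e \<le> K"
  proof (rule norm_le_unit[OF K0])
    fix x :: 'a assume x: "norm x \<le> 1"
    have "e x \<ge> g e + d/2" by (rule key[OF x])
    moreover have "e (-x) \<ge> g e + d/2" by (rule key) (use x in simp)
    moreover have "e (-x) = - e x" by (simp add: blinfun.minus_right)
    ultimately show "\<bar>e x\<bar> \<le> K" unfolding K_def by linarith
  qed
  moreover have "\<bar>g e\<bar> \<le> norm e"
  proof -
    have "norm (g e) \<le> norm g * norm e" by (rule norm_blinfun)
    also have "\<dots> \<le> 1 * norm e" by (rule mult_right_mono[OF g1]) simp
    finally show ?thesis by simp
  qed
  ultimately show False using dpos unfolding K_def by linarith
qed
lemma arith1:
  fixes \<epsilon> a b L :: real
  assumes "0 < \<epsilon>" "\<epsilon> < 1" "1 \<le> a" "b \<le> a + \<epsilon>/4" "(1-\<epsilon>/2)*a \<le> L"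
  shows "(1-\<epsilon>)*b \<le> L"
proof -
  have "(1-\<epsilon>)*b \<le> (1-\<epsilon>)*(a+\<epsilon>/4)" by (rule mult_left_mono) (use assms in auto)
  moreover have "\<epsilon>*1 \<le> \<epsilon>*a" by (rule mult_left_mono) (use assms in auto)
  moreover have "0 \<le> \<epsilon>*\<epsilon>" by simp
  moreover have "(1-\<epsilon>)*(a+\<epsilon>/4) = a - \<epsilon>*a + \<epsilon>/4 - \<epsilon>*\<epsilon>/4" by (simp add: field_simps)
  moreover have "(1-\<epsilon>/2)*a = a - \<epsilon>*a/2" by (simp add: algebra_simps)
  ultimately show ?thesis using assms by linarith
qed

lemma arith2:
  fixes \<epsilon> nz gz L :: real
  assumes "0 < \<epsilon>" "\<epsilon> < 1" "2/\<epsilon> < nz" "0 \<le> gz" "gz \<le> nz" "nz - 1 \<le> L"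
  shows "(1-\<epsilon>)*(gz+1) \<le> L"
proof -
  have "(1-\<epsilon>)*(gz+1) \<le> (1-\<epsilon>)*(nz+1)" by (rule mult_left_mono) (use assms in auto)
  moreover have "2 < \<epsilon>*nz" using assms(1,3) by (simp add: divide_less_eq mult.commute)
  moreover have "(1-\<epsilon>)*(nz+1) = nz + 1 - \<epsilon>*nz - \<epsilon>" by (simp add: algebra_simps)
  ultimately show ?thesis using assms by linarith
qed

lemma arith3:
  fixes \<epsilon> a c \<eta> L :: real
  assumes "0 < \<epsilon>" "\<epsilon> < 1" "1 \<le> a" "0 \<le> \<eta>" "\<eta> < \<epsilon>/4" "a - \<eta> \<le> c" "(1-\<epsilon>/2)*c - \<eta> \<le> L"
  shows "(1-\<epsilon>)*a \<le> L"
proof -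
  have h1: "(1-\<epsilon>/2)*(a-\<eta>) \<le> (1-\<epsilon>/2)*c" by (rule mult_left_mono) (use assms in auto)
  have h2: "\<epsilon>*1 \<le> \<epsilon>*a" by (rule mult_left_mono) (use assms in auto)
  have h3: "0 \<le> \<epsilon>*\<eta>" using assms by simp
  have k: "(1-\<epsilon>/2)*(a-\<eta>) - \<eta> - (1-\<epsilon>)*a = \<epsilon>*a/2 - 2*\<eta> + \<epsilon>*\<eta>/2" by (simp add: field_simps)
  have "\<epsilon>*a/2 - 2*\<eta> + \<epsilon>*\<eta>/2 \<ge> 0" using h2 h3 assms(5) by linarith
  then have "(1-\<epsilon>)*a \<le> (1-\<epsilon>/2)*(a-\<eta>) - \<eta>" using k by linarith
  then show ?thesis using h1 assms(7) by linarith
qed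


lemma abs_apply_le1:
  fixes h :: "'a::real_normed_vector \<Rightarrow>\<^sub>L real"
  assumes "norm v \<le> 1" shows "\<bar>h v\<bar> \<le> norm h"
proof -
  have "norm (h v) \<le> norm h * norm v" by (rule norm_blinfun)
  also have "\<dots> \<le> norm h * 1" by (rule mult_left_mono[OF assms]) simp
  finally show ?thesis by simp
qed

lemma abs_apply_le2:
  fixes h :: "'a::real_normed_vector \<Rightarrow>\<^sub>L real"
  assumes "norm h \<le> 1" shows "\<bar>h v\<bar> \<le> norm v"
proof -
  have "norm (h v) \<le> norm h * norm v" by (rule norm_blinfun)
  also have "\<dots> \<le> 1 * norm v" by (rule mult_right_mono[OF assms]) simp
  finally show ?thesis by simp
qed

lemma goldstine_span:
  fixes F :: "('a::real_normed_vector \<Rightarrow>\<^sub>L real) set" and g :: "('a \<Rightarrow>\<^sub>L real) \<Rightarrow>\<^sub>L real"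
  assumes F: "finite F" and g1: "norm g \<le> 1" and d: "\<delta> > 0"
  shows "\<exists>x. norm x \<le> 1 \<and> (\<forall>f\<in>span F. norm f \<le> R \<longrightarrow> \<bar>g f - f x\<bar> \<le> \<delta>)"
proof -
  have d3: "\<delta>/3 > 0" using d by simp
  obtain N where N: "finite N" "N \<subseteq> span F \<inter> cball 0 R"
    "\<And>f. f \<in> span F \<Longrightarrow> norm f \<le> R \<Longrightarrow> \<exists>n\<in>N. norm (f - n) < \<delta>/3"
    using span_net[OF F d3, of R] by blast
  obtain x where x: "norm x \<le> 1" "\<forall>n\<in>N. \<bar>g n - n x\<bar> \<le> \<delta>/3"
    using goldstine_finite[OF N(1) g1 d3] by blast
  have "\<bar>g f - f x\<bar> \<le> \<delta>" if f: "f \<in> span F" "norm f \<le> R" for f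
  proof -
    obtain n where n: "n \<in> N" "norm (f - n) < \<delta>/3" using N(3)[OF f] by blast
    have "g f - g n = g (f - n)" by (simp add: blinfun.diff_right)
    then have A: "\<bar>g f - g n\<bar> \<le> norm (f - n)" using abs_apply_le2[OF g1, of "f - n"] by simp
    have "n x - f x = (n - f) x" by (simp add: blinfun.diff_left)
    then have B: "\<bar>n x - f x\<bar> \<le> norm (f - n)" using abs_apply_le1[OF x(1), of "n - f"]
      by (simp add: norm_minus_commute)
    have C: "\<bar>g n - n x\<bar> \<le> \<delta>/3" using x(2) n(1) by blast
    show ?thesis using A B C n(2) by linarith
  qed
  then show ?thesis using x(1) by blast
qed

definition cond2 :: "'a::banach itself \<Rightarrow> bool" where
  "cond2 _ \<longleftrightarrow> (\<forall>F::('a \<Rightarrow>\<^sub>L real) set. finite F \<longrightarrow>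
            (\<forall>x::'a. norm x \<le> 1 \<longrightarrow>
              (\<forall>\<epsilon>>0. \<exists>y::'a \<Rightarrow>\<^sub>L real. norm y = 1 \<and>
                 (\<forall>f\<in>span F. norm (f + y) \<ge> (1 - \<epsilon>) * (\<bar>blinfun_apply f x\<bar> + norm y)))))"

definition cond3 :: "'a::banach itself \<Rightarrow> bool" where
  "cond3 _ \<longleftrightarrow> (\<forall>(n::nat) (xs::nat \<Rightarrow> ('a \<Rightarrow>\<^sub>L real)). (\<forall>i\<in>{1..n}. norm (xs i) = 1) \<longrightarrow>
            (\<forall>x::'a. norm x \<le> 1 \<longrightarrow>
              (\<forall>\<epsilon>>0. \<exists>y::'a \<Rightarrow>\<^sub>L real. norm y = 1 \<and>
                 (\<forall>i\<in>{1..n}. \<forall>t::real. t \<ge> \<epsilon> \<longrightarrow>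
                    norm (xs i + t *\<^sub>R y) \<ge> (1 - \<epsilon>) * (\<bar>blinfun_apply (xs i) x\<bar> + t)))))"

lemma W_imp_2:
  assumes W: "weakly_octahedral TYPE('a::banach \<Rightarrow>\<^sub>L real)"
  shows "cond2 TYPE('a)"
  unfolding cond2_def
proof (intro allI impI)
  fix F :: "('a \<Rightarrow>\<^sub>L real) set" and x :: 'a and \<epsilon> :: real
  assume F: "finite F" and x: "norm x \<le> 1" and e: "\<epsilon> > 0"
  have bl: "bounded_linear (\<lambda>f::'a \<Rightarrow>\<^sub>L real. blinfun_apply f x)" by (rule blinfun.bounded_linear_left)
  define g where "g = Blinfun (\<lambda>f::'a \<Rightarrow>\<^sub>L real. blinfun_apply f x)"
  have gapp: "blinfun_apply g f = f x" for f unfolding g_def using bounded_linear_Blinfun_apply[OF bl] by simp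
  have g1: "norm g \<le> 1"
  proof (rule norm_blinfun_bound)
    fix f :: "'a \<Rightarrow>\<^sub>L real"
    show "norm (blinfun_apply g f) \<le> 1 * norm f" using abs_apply_le1[OF x, of f] gapp by simp
  qed simp
  obtain y where y: "norm y = 1" "\<forall>z\<in>span F. norm (z + y) \<ge> (1 - \<epsilon>) * (\<bar>blinfun_apply g z\<bar> + norm y)"
    using W[unfolded weakly_octahedral_def, rule_format, OF F g1 e] by blast
  show "\<exists>y::'a \<Rightarrow>\<^sub>L real. norm y = 1 \<and>
                 (\<forall>f\<in>span F. norm (f + y) \<ge> (1 - \<epsilon>) * (\<bar>blinfun_apply f x\<bar> + norm y))"
    using y gapp by auto
qed

lemma big_norm_case:
  fixes z y :: "'a::real_normed_vector \<Rightarrow>\<^sub>L real"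
  assumes "0 < \<epsilon>" "\<epsilon> < 1" "2/\<epsilon> < norm z" "norm y = 1" "0 \<le> gz" "gz \<le> norm z"
  shows "(1-\<epsilon>)*(gz + norm y) \<le> norm (z + y)"
proof -
  have "norm z \<le> norm (z + y) + norm y" using norm_triangle_ineq4[of "z + y" y] by simp
  then show ?thesis using arith2[OF assms(1,2,3,5,6)] assms(4) by simp
qed

lemma two_imp_W:
  assumes C: "cond2 TYPE('a::banach)"
  shows "weakly_octahedral TYPE('a \<Rightarrow>\<^sub>L real)"
  unfolding weakly_octahedral_def
proof (intro allI impI)
  fix F :: "('a \<Rightarrow>\<^sub>L real) set" and g :: "('a \<Rightarrow>\<^sub>L real) \<Rightarrow>\<^sub>L real" and \<epsilon> :: real
  assume F: "finite F" and g1: "norm g \<le> 1" and e: "\<epsilon> > 0"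
  obtain x where x: "norm x \<le> 1" "\<forall>f\<in>span F. norm f \<le> 2/\<epsilon> \<longrightarrow> \<bar>g f - f x\<bar> \<le> \<epsilon>/4"
    using goldstine_span[OF F g1, of "\<epsilon>/4" "2/\<epsilon>"] e by auto
  have e2: "\<epsilon>/2 > 0" using e by simp
  obtain y where y: "norm y = 1" "\<forall>f\<in>span F. norm (f + y) \<ge> (1 - \<epsilon>/2) * (\<bar>blinfun_apply f x\<bar> + norm y)"
    using C[unfolded cond2_def, rule_format, OF F x(1) e2] by blast
  have "(1 - \<epsilon>) * (\<bar>g z\<bar> + norm y) \<le> norm (z + y)" if z: "z \<in> span F" for z
  proof (cases "\<epsilon> < 1")
    case False
    then have "(1 - \<epsilon>) * (\<bar>g z\<bar> + norm y) \<le> 0" by (intro mult_nonpos_nonneg) auto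
    then show ?thesis by (metis norm_ge_zero order_trans)
  next
    case True
    show ?thesis
    proof (cases "norm z \<le> 2/\<epsilon>")
      case small: True
      have "\<bar>g z - z x\<bar> \<le> \<epsilon>/4" using x(2) z small by blast
      then have "\<bar>g z\<bar> \<le> \<bar>z x\<bar> + \<epsilon>/4" by linarith
      then have "\<bar>g z\<bar> + norm y \<le> (\<bar>z x\<bar> + 1) + \<epsilon>/4" using y(1) by simp
      moreover have "(1 - \<epsilon>/2) * (\<bar>z x\<bar> + 1) \<le> norm (z + y)" using y z by simp
      ultimately show ?thesis using arith1[OF e True, of "\<bar>z x\<bar> + 1"] by simp
    next
      case big: False
      have "\<bar>g z\<bar> \<le> norm z" by (rule abs_apply_le2[OF g1])
      then show ?thesis using big_norm_case[OF e True _ y(1)] big by simp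
    qed
  qed
  then show "\<exists>y. norm y = 1 \<and> (\<forall>z\<in>span F. (1 - \<epsilon>) * (\<bar>g z\<bar> + norm y) \<le> norm (z + y))"
    using y(1) by blast
qed

lemma two_imp_3:
  assumes C: "cond2 TYPE('a::banach)"
  shows "cond3 TYPE('a)"
  unfolding cond3_def
proof (intro allI impI)
  fix n :: nat and xs :: "nat \<Rightarrow> ('a \<Rightarrow>\<^sub>L real)" and x :: 'a and \<epsilon> :: real
  assume xs: "\<forall>i\<in>{1..n}. norm (xs i) = 1" and x: "norm x \<le> 1" and e: "\<epsilon> > 0"
  have F: "finite (xs ` {1..n})" by simp
  obtain y where y: "norm y = 1" "\<forall>f\<in>span (xs ` {1..n}). norm (f + y) \<ge> (1 - \<epsilon>) * (\<bar>blinfun_apply f x\<bar> + norm y)"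
    using C[unfolded cond2_def, rule_format, OF F x e] by blast
  have "norm (xs i + t *\<^sub>R y) \<ge> (1 - \<epsilon>) * (\<bar>blinfun_apply (xs i) x\<bar> + t)"
    if i: "i \<in> {1..n}" and t: "t \<ge> \<epsilon>" for i t
  proof -
    have t0: "t > 0" using t e by simp
    have "(1/t) *\<^sub>R xs i \<in> span (xs ` {1..n})" using i by (intro span_scale span_base) auto
    then have "norm ((1/t) *\<^sub>R xs i + y) \<ge> (1 - \<epsilon>) * (\<bar>blinfun_apply ((1/t) *\<^sub>R xs i) x\<bar> + 1)"
      using y by simp
    then have "t * norm ((1/t) *\<^sub>R xs i + y) \<ge> t * ((1 - \<epsilon>) * (\<bar>blinfun_apply ((1/t) *\<^sub>R xs i) x\<bar> + 1))"
      using t0 by (intro mult_left_mono) auto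
    moreover have "t * norm ((1/t) *\<^sub>R xs i + y) = norm (xs i + t *\<^sub>R y)"
    proof -
      have "xs i + t *\<^sub>R y = t *\<^sub>R ((1/t) *\<^sub>R xs i + y)" using t0 by (simp add: scaleR_add_right)
      then show ?thesis using t0 by simp
    qed
    moreover have "t * ((1 - \<epsilon>) * (\<bar>blinfun_apply ((1/t) *\<^sub>R xs i) x\<bar> + 1)) = (1 - \<epsilon>) * (\<bar>blinfun_apply (xs i) x\<bar> + t)"
      using t0 by (simp add: blinfun.scaleR_left abs_mult field_simps)
    ultimately show ?thesis by simp
  qed
  then show "\<exists>y::'a \<Rightarrow>\<^sub>L real. norm y = 1 \<and>
                 (\<forall>i\<in>{1..n}. \<forall>t::real. t \<ge> \<epsilon> \<longrightarrow>
                    norm (xs i + t *\<^sub>R y) \<ge> (1 - \<epsilon>) * (\<bar>blinfun_apply (xs i) x\<bar> + t))"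
    using y(1) by blast
qed

lemma three_imp_2:
  assumes C: "cond3 TYPE('a::banach)"
  shows "cond2 TYPE('a)"
  unfolding cond2_def
proof (intro allI impI)
  fix F :: "('a \<Rightarrow>\<^sub>L real) set" and x :: 'a and \<epsilon> :: real
  assume F: "finite F" and x: "norm x \<le> 1" and e: "\<epsilon> > 0"
  show "\<exists>y::'a \<Rightarrow>\<^sub>L real. norm y = 1 \<and>
                 (\<forall>f\<in>span F. norm (f + y) \<ge> (1 - \<epsilon>) * (\<bar>blinfun_apply f x\<bar> + norm y))"
  proof (cases "\<epsilon> < 1")
    case False
    obtain y :: "'a \<Rightarrow>\<^sub>L real" where y: "norm y = 1"
      using C[unfolded cond3_def, rule_format, of 0 "\<lambda>_. 0" x 1] x by auto
    have "(1 - \<epsilon>) * (\<bar>blinfun_apply f x\<bar> + norm y) \<le> norm (f + y)" for f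
    proof -
      have "(1 - \<epsilon>) * (\<bar>blinfun_apply f x\<bar> + norm y) \<le> 0" using False by (intro mult_nonpos_nonneg) auto
      then show ?thesis by (metis norm_ge_zero order_trans)
    qed
    then show ?thesis using y by blast
  next
    case True
    have e4: "\<epsilon>/4 > 0" using e by simp
    obtain N where N: "finite N" "N \<subseteq> span F \<inter> cball 0 (2/\<epsilon>)"
      "\<And>f. f \<in> span F \<Longrightarrow> norm f \<le> 2/\<epsilon> \<Longrightarrow> \<exists>n\<in>N. norm (f - n) < \<epsilon>/4"
      using span_net[OF F e4, of "2/\<epsilon>"] by blast
    define N' where "N' = N - {0}"
    have finN': "finite N'" using N(1) unfolding N'_def by simp
    obtain h where h: "bij_betw h {1..card N'} N'" using ex_bij_betw_nat_finite_1[OF finN'] by blast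
    define xs where "xs i = (1 / norm (h i)) *\<^sub>R h i" for i
    have hN: "h i \<in> N'" if "i \<in> {1..card N'}" for i using h that by (auto simp: bij_betw_def)
    have nxs: "\<forall>i\<in>{1..card N'}. norm (xs i) = 1"
    proof
      fix i assume "i \<in> {1..card N'}"
      then have "h i \<noteq> 0" using hN unfolding N'_def by blast
      then show "norm (xs i) = 1" unfolding xs_def by simp
    qed
    have e2: "\<epsilon>/2 > 0" using e by simp
    obtain y where y: "norm y = 1" "\<forall>i\<in>{1..card N'}. \<forall>t::real. t \<ge> \<epsilon>/2 \<longrightarrow>
                    norm (xs i + t *\<^sub>R y) \<ge> (1 - \<epsilon>/2) * (\<bar>blinfun_apply (xs i) x\<bar> + t)"
      using C[unfolded cond3_def, rule_format, of "card N'" xs x "\<epsilon>/2"] nxs x e2 by blast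
    have claim: "norm (n + y) \<ge> (1 - \<epsilon>/2) * (\<bar>n x\<bar> + 1)" if n: "n \<in> N" for n
    proof (cases "n = 0")
      case True
      then show ?thesis using y(1) e by simp
    next
      case False
      then have "n \<in> N'" using n unfolding N'_def by simp
      moreover have "h ` {1..card N'} = N'" using h by (simp add: bij_betw_def)
      ultimately obtain i where i: "i \<in> {1..card N'}" "n = h i" by (metis imageE)
      have nn: "norm n > 0" using False by simp
      have nR: "norm n \<le> 2/\<epsilon>" using N(2) n by auto
      define t where "t = 1 / norm n"
      have tge: "t \<ge> \<epsilon>/2"
      proof -
        have "norm n * \<epsilon> \<le> 2" using nR e by (simp add: le_divide_eq mult.commute)
        then show ?thesis unfolding t_def using nn e by (simp add: field_simps)
      qed
      have xsi: "xs i = t *\<^sub>R n" unfolding xs_def t_def using i(2) by simp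
      have ineq: "norm (xs i + t *\<^sub>R y) \<ge> (1 - \<epsilon>/2) * (\<bar>blinfun_apply (xs i) x\<bar> + t)"
        using y(2) i(1) tge by blast
      have "n + y = norm n *\<^sub>R (xs i + t *\<^sub>R y)" unfolding xsi t_def using nn
        by (simp add: scaleR_add_right)
      then have eq1: "norm (n + y) = norm n * norm (xs i + t *\<^sub>R y)" using nn by simp
      have eq2: "norm n * ((1 - \<epsilon>/2) * (\<bar>blinfun_apply (xs i) x\<bar> + t)) = (1 - \<epsilon>/2) * (\<bar>n x\<bar> + 1)"
        unfolding xsi t_def using nn by (simp add: blinfun.scaleR_left abs_mult field_simps)
      have "norm n * ((1 - \<epsilon>/2) * (\<bar>blinfun_apply (xs i) x\<bar> + t)) \<le> norm n * norm (xs i + t *\<^sub>R y)"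
        using ineq nn by (intro mult_left_mono) auto
      then show ?thesis using eq1 eq2 by simp
    qed
    have "(1 - \<epsilon>) * (\<bar>blinfun_apply f x\<bar> + norm y) \<le> norm (f + y)" if f: "f \<in> span F" for f
    proof (cases "norm f \<le> 2/\<epsilon>")
      case True
      then obtain n where n: "n \<in> N" "norm (f - n) < \<epsilon>/4" using N(3) f by blast
      have cl: "norm (n + y) \<ge> (1 - \<epsilon>/2) * (\<bar>n x\<bar> + 1)" by (rule claim[OF n(1)])
      have "f x - n x = (f - n) x" by (simp add: blinfun.diff_left)
      then have "\<bar>f x - n x\<bar> \<le> norm (f - n)" using abs_apply_le1[OF x, of "f - n"] by simp
      then have c1: "\<bar>f x\<bar> + 1 - norm (f - n) \<le> \<bar>n x\<bar> + 1" by linarith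
      have "norm (n + y) \<le> norm (f + y) + norm (f - n)"
        using norm_triangle_ineq[of "f + y" "n - f"] by (simp add: norm_minus_commute algebra_simps)
      then have c2: "(1 - \<epsilon>/2) * (\<bar>n x\<bar> + 1) - norm (f - n) \<le> norm (f + y)" using cl by linarith
      have "(1 - \<epsilon>) * (\<bar>f x\<bar> + 1) \<le> norm (f + y)"
        by (rule arith3[OF e \<open>\<epsilon> < 1\<close> _ norm_ge_zero n(2) c1 c2]) simp
      then show ?thesis using y(1) by simp
    next
      case False
      have "\<bar>f x\<bar> \<le> norm f" by (rule abs_apply_le1[OF x])
      then show ?thesis using big_norm_case[OF e \<open>\<epsilon> < 1\<close> _ y(1)] False by simp
    qed
    then show ?thesis using y(1) by blast
  qed
qed

theorem proposition2p6:
  fixes X :: "'a::banach itself"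
  assumes nontriv: "\<exists>x::'a. x \<noteq> 0"
  shows "(weakly_octahedral TYPE('a \<Rightarrow>\<^sub>L real)
           \<longleftrightarrow>
          (\<forall>F::('a \<Rightarrow>\<^sub>L real) set. finite F \<longrightarrow>
            (\<forall>x::'a. norm x \<le> 1 \<longrightarrow>
              (\<forall>\<epsilon>>0. \<exists>y::'a \<Rightarrow>\<^sub>L real. norm y = 1 \<and>
                 (\<forall>f\<in>span F. norm (f + y) \<ge> (1 - \<epsilon>) * (\<bar>blinfun_apply f x\<bar> + norm y))))))
       \<and> (weakly_octahedral TYPE('a \<Rightarrow>\<^sub>L real)
           \<longleftrightarrow>
          (\<forall>(n::nat) (xs::nat \<Rightarrow> ('a \<Rightarrow>\<^sub>L real)). (\<forall>i\<in>{1..n}. norm (xs i) = 1) \<longrightarrow>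
            (\<forall>x::'a. norm x \<le> 1 \<longrightarrow>
              (\<forall>\<epsilon>>0. \<exists>y::'a \<Rightarrow>\<^sub>L real. norm y = 1 \<and>
                 (\<forall>i\<in>{1..n}. \<forall>t::real. t \<ge> \<epsilon> \<longrightarrow>
                    norm (xs i + t *\<^sub>R y) \<ge> (1 - \<epsilon>) * (\<bar>blinfun_apply (xs i) x\<bar> + t))))))"
proof -
  have a: "weakly_octahedral TYPE('a \<Rightarrow>\<^sub>L real) \<longleftrightarrow> cond2 TYPE('a)"
    using W_imp_2 two_imp_W by blast
  have b: "weakly_octahedral TYPE('a \<Rightarrow>\<^sub>L real) \<longleftrightarrow> cond3 TYPE('a)"
    using a two_imp_3 three_imp_2 by blast
  show ?thesis using a b unfolding cond2_def cond3_def by blast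
qed

end
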